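(* Let $f\in\mathcal H$, $f\ne0$, and let $d=\operatorname{ord}_0(f)$. Put $J=f-\Pi_{[Sf]}(f)=\Pi_{[Sf]^\perp}(f)$ and $v=\Pi_{[f]}\big(k_0^{(d)}\big)$. Then $$v=\frac{v^{(d)}(0)}{f^{(d)}(0)}\,J.$$
   Context: Standing assumptions: $\Omega\subset\mathbb C$ is a domain with $0\in\Omega$, and $\mathcal H$ is a Hilbert space of analytic functions on $\Omega$ in which every point evaluation $f\mapsto f(w)$, $w\in\Omega$, is bounded; the shift $S$, $(Sf)(z)=zf(z)$, is bounded on $\mathcal H$; and the polynomials $\mathcal P$ are dense in $\mathcal H$. For $w\in\Omega$, $m\ge0$, $k_w^{(m)}\in\mathcal H$ satisfies $\langle f,k_w^{(m)}\rangle=f^{(m)}(w)$ for all $f\in\mathcal H$. For $g\in\mathcal H$, $[g]$ is the closure in $\mathcal H$ of $\operatorname{span}\{z^kg:k\ge0\}$. $\Pi_V$ denotes orthogonal projection onto a closed subspace $V$; $\operatorname{ord}_0(f)$ is the order of the zero of $f$ at $0$. *)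

theory Defs
  imports "HOL-Complex_Analysis.Complex_Analysis" "HOL-Computational_Algebra.Polynomial"
begin

type_synonym cfun = "complex \<Rightarrow> complex"

text \<open>Elements of the space are functions on the complex plane that are holomorphic on
  the domain and (as a normalisation) vanish outside of it; the inner product is an
  arbitrary function ip, required by the predicate below to be a complete inner product.\<close>

definition hnorm :: "(cfun \<Rightarrow> cfun \<Rightarrow> complex) \<Rightarrow> cfun \<Rightarrow> real" where
  "hnorm ip f = sqrt (Re (ip f f))"

definition hclosure :: "cfun set \<Rightarrow> (cfun \<Rightarrow> cfun \<Rightarrow> complex) \<Rightarrow> cfun set \<Rightarrow> cfun set" where
  "hclosure H ip A = {f \<in> H. \<forall>e>0. \<exists>a\<in>A. hnorm ip (\<lambda>z. f z - a z) < e}"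

definition polyOn :: "complex set \<Rightarrow> complex poly \<Rightarrow> cfun" where
  "polyOn \<Omega> p = (\<lambda>z. if z \<in> \<Omega> then poly p z else 0)"

definition shift :: "cfun \<Rightarrow> cfun" where
  "shift f = (\<lambda>z. z * f z)"

definition cyc :: "cfun set \<Rightarrow> (cfun \<Rightarrow> cfun \<Rightarrow> complex) \<Rightarrow> cfun \<Rightarrow> cfun set" where
  "cyc H ip g = hclosure H ip {(\<lambda>z. poly p z * g z) | p. True}"

definition hproj :: "(cfun \<Rightarrow> cfun \<Rightarrow> complex) \<Rightarrow> cfun set \<Rightarrow> cfun \<Rightarrow> cfun" where
  "hproj ip V f = (THE g. g \<in> V \<and> (\<forall>h\<in>V. ip (\<lambda>z. f z - g z) h = 0))"

definition analytic_hilbert_space ::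
  "complex set \<Rightarrow> cfun set \<Rightarrow> (cfun \<Rightarrow> cfun \<Rightarrow> complex) \<Rightarrow> bool" where
  "analytic_hilbert_space \<Omega> H ip \<longleftrightarrow>
     open \<Omega> \<and> connected \<Omega> \<and> 0 \<in> \<Omega> \<and>
     (\<forall>f\<in>H. f holomorphic_on \<Omega> \<and> (\<forall>z. z \<notin> \<Omega> \<longrightarrow> f z = 0)) \<and>
     (\<lambda>z. 0) \<in> H \<and>
     (\<forall>f\<in>H. \<forall>g\<in>H. (\<lambda>z. f z + g z) \<in> H) \<and>
     (\<forall>f\<in>H. \<forall>c. (\<lambda>z. c * f z) \<in> H) \<and>
     (\<forall>f\<in>H. \<forall>g\<in>H. \<forall>h\<in>H. ip (\<lambda>z. f z + g z) h = ip f h + ip g h) \<and>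
     (\<forall>f\<in>H. \<forall>g\<in>H. \<forall>c. ip (\<lambda>z. c * f z) g = c * ip f g) \<and>
     (\<forall>f\<in>H. \<forall>g\<in>H. ip g f = cnj (ip f g)) \<and>
     (\<forall>f\<in>H. Im (ip f f) = 0 \<and> Re (ip f f) \<ge> 0) \<and>
     (\<forall>f\<in>H. ip f f = 0 \<longrightarrow> f = (\<lambda>z. 0)) \<and>
     (\<forall>F. (\<forall>n. F n \<in> H) \<and>
          (\<forall>e>0. \<exists>N. \<forall>m\<ge>N. \<forall>n\<ge>N. hnorm ip (\<lambda>z. F m z - F n z) < e) \<longrightarrow>
          (\<exists>g\<in>H. (\<lambda>n. hnorm ip (\<lambda>z. F n z - g z)) \<longlonglongrightarrow> 0)) \<and>
     (\<forall>w\<in>\<Omega>. \<exists>C. \<forall>f\<in>H. norm (f w) \<le> C * hnorm ip f) \<and>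
     (\<forall>f\<in>H. shift f \<in> H) \<and>
     (\<exists>C. \<forall>f\<in>H. hnorm ip (shift f) \<le> C * hnorm ip f) \<and>
     (\<forall>p. polyOn \<Omega> p \<in> H) \<and>
     hclosure H ip {polyOn \<Omega> p | p. True} = H"

end

theory Submission
  imports Defs
begin


locale ahs =
  fixes Om :: "complex set" and H :: "cfun set" and ip :: "cfun \<Rightarrow> cfun \<Rightarrow> complex"
  assumes ahs: "analytic_hilbert_space Om H ip"
begin

lemma AX:
  "open Om" "connected Om" "0 \<in> Om"
  "(\<forall>f\<in>H. f holomorphic_on Om \<and> (\<forall>z. z \<notin> Om \<longrightarrow> f z = 0))"
  "(\<lambda>z. 0) \<in> H"
  "(\<forall>f\<in>H. \<forall>g\<in>H. (\<lambda>z. f z + g z) \<in> H)"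
  "(\<forall>f\<in>H. \<forall>c. (\<lambda>z. c * f z) \<in> H)"
  "(\<forall>f\<in>H. \<forall>g\<in>H. \<forall>h\<in>H. ip (\<lambda>z. f z + g z) h = ip f h + ip g h)"
  "(\<forall>f\<in>H. \<forall>g\<in>H. \<forall>c. ip (\<lambda>z. c * f z) g = c * ip f g)"
  "(\<forall>f\<in>H. \<forall>g\<in>H. ip g f = cnj (ip f g))"
  "(\<forall>f\<in>H. Im (ip f f) = 0 \<and> Re (ip f f) \<ge> 0)"
  "(\<forall>f\<in>H. ip f f = 0 \<longrightarrow> f = (\<lambda>z. 0))"
  "(\<forall>F. (\<forall>n. F n \<in> H) \<and>
          (\<forall>e>0. \<exists>N. \<forall>m\<ge>N. \<forall>n\<ge>N. hnorm ip (\<lambda>z. F m z - F n z) < e) \<longrightarrow>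
          (\<exists>g\<in>H. (\<lambda>n. hnorm ip (\<lambda>z. F n z - g z)) \<longlonglongrightarrow> 0))"
  "(\<forall>f\<in>H. shift f \<in> H)"
  by (insert ahs[unfolded analytic_hilbert_space_def]) (elim conjE, assumption)+

lemma zero_in: "(\<lambda>z. 0) \<in> H" by (rule AX(5))
lemma add_in: "f \<in> H \<Longrightarrow> g \<in> H \<Longrightarrow> (\<lambda>z. f z + g z) \<in> H"
  using AX(6) by blast
lemma scale_in: "f \<in> H \<Longrightarrow> (\<lambda>z. c * f z) \<in> H"
  using AX(7) by blast
lemma ip_add: "f \<in> H \<Longrightarrow> g \<in> H \<Longrightarrow> h \<in> H \<Longrightarrow> ip (\<lambda>z. f z + g z) h = ip f h + ip g h"
  using AX(8) by blast
lemma ip_scale: "f \<in> H \<Longrightarrow> g \<in> H \<Longrightarrow> ip (\<lambda>z. c * f z) g = c * ip f g"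
  using AX(9) by blast
lemma ip_sym: "f \<in> H \<Longrightarrow> g \<in> H \<Longrightarrow> ip g f = cnj (ip f g)"
  using AX(10) by blast
lemma ip_pos: "f \<in> H \<Longrightarrow> Im (ip f f) = 0 \<and> Re (ip f f) \<ge> 0"
  using AX(11) by blast
lemma ip_def0: "f \<in> H \<Longrightarrow> ip f f = 0 \<Longrightarrow> f = (\<lambda>z. 0)"
  using AX(12) by blast
lemma complete: "(\<And>n. F n \<in> H) \<Longrightarrow>
          (\<forall>e>0. \<exists>N. \<forall>m\<ge>N. \<forall>n\<ge>N. hnorm ip (\<lambda>z. F m z - F n z) < e) \<Longrightarrow>
          (\<exists>g\<in>H. (\<lambda>n. hnorm ip (\<lambda>z. F n z - g z)) \<longlonglongrightarrow> 0)"
  using AX(13) by blast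
lemma shift_in: "f \<in> H \<Longrightarrow> shift f \<in> H"
  using AX(14) by blast
lemma holo: "f \<in> H \<Longrightarrow> f holomorphic_on Om"
  using AX(4) by blast
lemma out0: "f \<in> H \<Longrightarrow> z \<notin> Om \<Longrightarrow> f z = 0"
  using AX(4) by blast
lemma Om: "open Om" "connected Om" "0 \<in> Om"
  using AX(1-3) by auto

lemma sub_in: "f \<in> H \<Longrightarrow> g \<in> H \<Longrightarrow> (\<lambda>z. f z - g z) \<in> H"
proof -
  assume a: "f \<in> H" "g \<in> H"
  have e: "(\<lambda>z. f z - g z) = (\<lambda>z. f z + (\<lambda>z. (-1) * g z) z)" by auto
  show ?thesis unfolding e by (rule add_in[OF a(1) scale_in[OF a(2)]])
qed

lemma ip_zero_left: "g \<in> H \<Longrightarrow> ip (\<lambda>z. 0) g = 0"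
  using ip_scale[of "\<lambda>z. 0" g 0] zero_in by simp

lemma ip_zero_right: "g \<in> H \<Longrightarrow> ip g (\<lambda>z. 0) = 0"
  using ip_sym[of g "\<lambda>z. 0"] ip_zero_left zero_in by simp

lemma ip_sub: "f \<in> H \<Longrightarrow> g \<in> H \<Longrightarrow> h \<in> H \<Longrightarrow> ip (\<lambda>z. f z - g z) h = ip f h - ip g h"
proof -
  assume a: "f \<in> H" "g \<in> H" "h \<in> H"
  have e: "(\<lambda>z. f z - g z) = (\<lambda>z. f z + (\<lambda>z. (-1) * g z) z)" by auto
  have "ip (\<lambda>z. f z + (\<lambda>z. (-1) * g z) z) h = ip f h + ip (\<lambda>z. (-1) * g z) h"
    by (rule ip_add[OF a(1) scale_in[OF a(2)] a(3)])
  thus ?thesis unfolding e using ip_scale[OF a(2) a(3), of "-1"] by simp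
qed

lemma ip_add_r: assumes a: "f \<in> H" "g \<in> H" "h \<in> H" shows "ip h (\<lambda>z. f z + g z) = ip h f + ip h g"
proof -
  have "ip h (\<lambda>z. f z + g z) = cnj (ip (\<lambda>z. f z + g z) h)" by (rule ip_sym[OF add_in[OF a(1,2)] a(3)])
  also have "\<dots> = cnj (ip f h) + cnj (ip g h)" using ip_add[OF a] by simp
  also have "\<dots> = ip h f + ip h g" using ip_sym[OF a(1) a(3)] ip_sym[OF a(2) a(3)] by simp
  finally show ?thesis .
qed
lemma ip_sub_r: assumes a: "f \<in> H" "g \<in> H" "h \<in> H" shows "ip h (\<lambda>z. f z - g z) = ip h f - ip h g"
proof -
  have "ip h (\<lambda>z. f z - g z) = cnj (ip (\<lambda>z. f z - g z) h)" by (rule ip_sym[OF sub_in[OF a(1,2)] a(3)])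
  also have "\<dots> = cnj (ip f h) - cnj (ip g h)" using ip_sub[OF a] by simp
  also have "\<dots> = ip h f - ip h g" using ip_sym[OF a(1) a(3)] ip_sym[OF a(2) a(3)] by simp
  finally show ?thesis .
qed
lemma ip_scale_r: assumes a: "f \<in> H" "g \<in> H" shows "ip g (\<lambda>z. c * f z) = cnj c * ip g f"
proof -
  have "ip g (\<lambda>z. c * f z) = cnj (ip (\<lambda>z. c * f z) g)" by (rule ip_sym[OF scale_in[OF a(1)] a(2)])
  also have "\<dots> = cnj c * cnj (ip f g)" using ip_scale[OF a] by simp
  also have "\<dots> = cnj c * ip g f" using ip_sym[OF a(1) a(2)] by simp
  finally show ?thesis .
qed

definition N :: "cfun \<Rightarrow> real" where "N f = Re (ip f f)"

lemma N_nonneg: assumes "f \<in> H" shows "N f \<ge> 0" unfolding N_def using ip_pos[OF assms] by (elim conjE)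
lemma ip_self: assumes "f \<in> H" shows "ip f f = complex_of_real (N f)"
  using ip_pos[OF assms] unfolding N_def by (simp add: complex_eq_iff)
lemma hnorm_N: "hnorm ip f = sqrt (N f)" unfolding hnorm_def N_def by simp
lemma hnorm_nonneg: assumes "f \<in> H" shows "hnorm ip f \<ge> 0" using N_nonneg[OF assms] by (simp add: hnorm_N)
lemma hnorm_sq: assumes "f \<in> H" shows "(hnorm ip f)^2 = N f" using N_nonneg[OF assms] by (simp add: hnorm_N)

lemma N_expand: assumes "f \<in> H" "g \<in> H"
  shows "N (\<lambda>z. f z - c * g z) = N f - 2 * Re (cnj c * ip f g) + (cmod c)^2 * N g"
proof -
  have cg: "(\<lambda>z. c * g z) \<in> H" using scale_in assms by blast
  have "ip (\<lambda>z. f z - c * g z) (\<lambda>z. f z - c * g z)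
      = ip f f - cnj c * ip f g - c * ip g f + c * cnj c * ip g g"
  proof -
    have d: "(\<lambda>z. f z - c * g z) \<in> H" using sub_in[OF assms(1) cg] by simp
    have "ip (\<lambda>z. f z - c * g z) (\<lambda>z. f z - c * g z) = ip f (\<lambda>z. f z - c * g z) - ip (\<lambda>z. c * g z) (\<lambda>z. f z - c * g z)"
      using ip_sub[OF assms(1) cg d] by simp
    also have "ip f (\<lambda>z. f z - c * g z) = ip f f - cnj c * ip f g"
      using ip_sub_r[OF assms(1) cg assms(1)] ip_scale_r[OF assms(2) assms(1)] by simp
    also have "ip (\<lambda>z. c * g z) (\<lambda>z. f z - c * g z) = c * (ip g f - cnj c * ip g g)"
      using ip_scale[OF assms(2) d] ip_sub_r[OF assms(1) cg assms(2)] ip_scale_r[OF assms(2) assms(2)] by simp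
    finally show ?thesis by (simp add: algebra_simps)
  qed
  also have "ip g f = cnj (ip f g)" using ip_sym assms by blast
  finally have e: "ip (\<lambda>z. f z - c * g z) (\<lambda>z. f z - c * g z)
      = ip f f - cnj c * ip f g - c * cnj (ip f g) + c * cnj c * ip g g" .
  have r1: "Re (c * cnj (ip f g)) = Re (cnj c * ip f g)"
    by simp
  have r2: "Re (c * cnj c * ip g g) = (cmod c)^2 * N g"
    using ip_self[OF assms(2)] by (simp add: complex_mult_cnj cmod_power2)
  show ?thesis unfolding N_def e using r1 r2 by (simp add: N_def)
qed

end


context ahs begin

lemma N_zero: "N (\<lambda>z. 0) = 0" unfolding N_def using ip_zero_left[OF zero_in] by simp

lemma N_scale: assumes "f \<in> H" shows "N (\<lambda>z. c * f z) = (cmod c)^2 * N f"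
proof -
  have "ip (\<lambda>z. c * f z) (\<lambda>z. c * f z) = c * ip f (\<lambda>z. c * f z)"
    by (rule ip_scale[OF assms scale_in[OF assms]])
  also have "ip f (\<lambda>z. c * f z) = cnj c * ip f f" by (rule ip_scale_r[OF assms assms])
  finally have "ip (\<lambda>z. c * f z) (\<lambda>z. c * f z) = c * (cnj c * ip f f)" .
  also have "\<dots> = c * (cnj c * complex_of_real (N f))" using ip_self[OF assms] by simp
  finally have "Re (ip (\<lambda>z. c * f z) (\<lambda>z. c * f z)) = Re (c * (cnj c * complex_of_real (N f)))" by simp
  also have "c * (cnj c * complex_of_real (N f)) = (c * cnj c) * complex_of_real (N f)" by (simp only: mult.assoc)
  also have "c * cnj c = complex_of_real ((cmod c)^2)" using complex_norm_square[of c] by simp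
  also have "Re (complex_of_real ((cmod c)^2) * complex_of_real (N f)) = (cmod c)^2 * N f" by simp
  finally show ?thesis unfolding N_def .
qed

lemma hnorm_scale: assumes "f \<in> H" shows "hnorm ip (\<lambda>z. c * f z) = cmod c * hnorm ip f"
  using N_scale[OF assms, of c] by (simp add: hnorm_N real_sqrt_mult)

lemma hnorm_sym: assumes "f \<in> H" "g \<in> H"
  shows "hnorm ip (\<lambda>z. f z - g z) = hnorm ip (\<lambda>z. g z - f z)"
proof -
  have "(\<lambda>z. g z - f z) = (\<lambda>z. (-1) * (\<lambda>z. f z - g z) z)" by auto
  thus ?thesis using hnorm_scale[OF sub_in[OF assms], of "-1"] by simp
qed

lemma hnorm_self: "hnorm ip (\<lambda>z. f z - f z) = 0"
  using N_zero by (simp add: hnorm_N)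

lemma cs: assumes "f \<in> H" "g \<in> H" shows "cmod (ip f g) \<le> hnorm ip f * hnorm ip g"
proof (cases "N g = 0")
  case True
  hence "g = (\<lambda>z. 0)" using ip_def0[OF assms(2)] ip_self[OF assms(2)] by simp
  thus ?thesis using ip_zero_right[OF assms(1)] hnorm_nonneg assms by simp
next
  case False
  define G where "G = N g"
  have G: "G > 0" using False N_nonneg[OF assms(2)] G_def by simp
  define a where "a = ip f g"
  define c where "c = a / complex_of_real G"
  have e1: "cnj c * a = complex_of_real ((cmod a)^2 / G)"
    unfolding c_def by (simp add: complex_norm_square[symmetric] field_simps)
  have e2: "(cmod c)^2 = (cmod a)^2 / G^2" unfolding c_def using G
    by (simp add: norm_divide power_divide)
  have "0 \<le> N (\<lambda>z. f z - c * g z)" using N_nonneg sub_in scale_in assms by blast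
  also have "\<dots> = N f - 2 * ((cmod a)^2 / G) + (cmod a)^2 / G^2 * G"
    using N_expand[OF assms, of c] e1 e2 unfolding a_def G_def by simp
  also have "\<dots> = N f - (cmod a)^2 / G" using G by (simp add: power2_eq_square field_simps)
  finally have "(cmod a)^2 \<le> N f * G" using G by (simp add: field_simps)
  hence "sqrt ((cmod a)^2) \<le> sqrt (N f * G)" by (rule real_sqrt_le_mono)
  thus ?thesis unfolding a_def G_def by (simp add: hnorm_N real_sqrt_mult)
qed

lemma tri0: assumes "f \<in> H" "g \<in> H"
  shows "hnorm ip (\<lambda>z. f z + g z) \<le> hnorm ip f + hnorm ip g"
proof -
  have fe: "(\<lambda>z. f z + g z) = (\<lambda>z. f z - (-1) * g z)" by auto
  have "N (\<lambda>z. f z + g z) = N f + 2 * Re (ip f g) + N g"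
    unfolding fe using N_expand[OF assms, of "-1"] by simp
  also have "Re (ip f g) \<le> hnorm ip f * hnorm ip g"
    using cs[OF assms] complex_Re_le_cmod order_trans by blast
  hence "N f + 2 * Re (ip f g) + N g \<le> (hnorm ip f + hnorm ip g)^2"
    using hnorm_sq assms by (simp add: power2_sum)
  finally have "sqrt (N (\<lambda>z. f z + g z)) \<le> sqrt ((hnorm ip f + hnorm ip g)^2)"
    by (rule real_sqrt_le_mono)
  thus ?thesis using hnorm_nonneg assms by (simp add: hnorm_N)
qed

lemma tri: assumes "f \<in> H" "g \<in> H" "h \<in> H"
  shows "hnorm ip (\<lambda>z. f z - h z) \<le> hnorm ip (\<lambda>z. f z - g z) + hnorm ip (\<lambda>z. g z - h z)"
proof -
  have "(\<lambda>z. f z - h z) = (\<lambda>z. (\<lambda>z. f z - g z) z + (\<lambda>z. g z - h z) z)" by auto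
  thus ?thesis using tri0[OF sub_in[OF assms(1,2)] sub_in[OF assms(2,3)]] by simp
qed

end


context ahs begin

definition subsp :: "cfun set \<Rightarrow> bool" where
  "subsp V \<longleftrightarrow> V \<subseteq> H \<and> (\<lambda>z. 0) \<in> V \<and> (\<forall>u\<in>V. \<forall>v\<in>V. (\<lambda>z. u z + v z) \<in> V)
     \<and> (\<forall>u\<in>V. \<forall>c. (\<lambda>z. c * u z) \<in> V)"

definition closedV :: "cfun set \<Rightarrow> bool" where
  "closedV V \<longleftrightarrow> (\<forall>y\<in>H. (\<forall>e>0. \<exists>a\<in>V. hnorm ip (\<lambda>z. y z - a z) < e) \<longrightarrow> y \<in> V)"

lemma subsp_sub: "subsp V \<Longrightarrow> u \<in> V \<Longrightarrow> v \<in> V \<Longrightarrow> (\<lambda>z. u z - v z) \<in> V"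
proof -
  assume a: "subsp V" "u \<in> V" "v \<in> V"
  have "(\<lambda>z. u z - v z) = (\<lambda>z. u z + (\<lambda>z. (-1) * v z) z)" by auto
  thus ?thesis using a unfolding subsp_def by metis
qed

lemma hcl_approx: "x \<in> hclosure H ip A \<Longrightarrow> e > 0 \<Longrightarrow> \<exists>a\<in>A. hnorm ip (\<lambda>z. x z - a z) < e"
  unfolding hclosure_def by blast

lemma hcl_sub: "hclosure H ip A \<subseteq> H" unfolding hclosure_def by auto

lemma hcl_incl: "A \<subseteq> H \<Longrightarrow> A \<subseteq> hclosure H ip A"
  unfolding hclosure_def using hnorm_self by force

lemma hcl_mono: "A \<subseteq> B \<Longrightarrow> hclosure H ip A \<subseteq> hclosure H ip B"
  unfolding hclosure_def by blast

lemma hcl_closed: assumes "A \<subseteq> H" shows "closedV (hclosure H ip A)"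
  unfolding closedV_def
proof (intro ballI impI)
  fix y assume y: "y \<in> H" and c: "\<forall>e>0. \<exists>a\<in>hclosure H ip A. hnorm ip (\<lambda>z. y z - a z) < e"
  show "y \<in> hclosure H ip A" unfolding hclosure_def
  proof (intro CollectI conjI allI impI y)
    fix e :: real assume e: "e > 0"
    have e2: "e/2 > 0" using e by simp
    obtain a where a: "a \<in> hclosure H ip A" "hnorm ip (\<lambda>z. y z - a z) < e/2" using c e2 by blast
    obtain b where b: "b \<in> A" "hnorm ip (\<lambda>z. a z - b z) < e/2"
      using hcl_approx[OF a(1) e2] by blast
    have "a \<in> H" "b \<in> H" using a b assms hcl_sub by auto
    hence "hnorm ip (\<lambda>z. y z - b z) < e" using tri[OF y, of a b] a b by simp
    thus "\<exists>a\<in>A. hnorm ip (\<lambda>z. y z - a z) < e" using b by blast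
  qed
qed

lemma hcl_subsp: assumes "subsp A" shows "subsp (hclosure H ip A)"
proof -
  have AH: "A \<subseteq> H" using assms subsp_def by auto
  have z: "(\<lambda>z. 0) \<in> hclosure H ip A" using hcl_incl[OF AH] assms subsp_def by auto
  have add: "(\<lambda>z. u z + v z) \<in> hclosure H ip A" if u: "u \<in> hclosure H ip A" and v: "v \<in> hclosure H ip A" for u v
  proof -
    have uH: "u \<in> H" "v \<in> H" using u v hcl_sub by auto
    show ?thesis unfolding hclosure_def
    proof (intro CollectI conjI allI impI add_in uH)
      fix e :: real assume e: "e > 0"
      have e2: "e/2 > 0" using e by simp
      obtain a where a: "a \<in> A" "hnorm ip (\<lambda>z. u z - a z) < e/2"
        using hcl_approx[OF u e2] by blast
      obtain b where b: "b \<in> A" "hnorm ip (\<lambda>z. v z - b z) < e/2"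
        using hcl_approx[OF v e2] by blast
      have aH: "a \<in> H" "b \<in> H" using a b AH by auto
      have "(\<lambda>z. (u z + v z) - (a z + b z)) = (\<lambda>z. (\<lambda>z. u z - a z) z + (\<lambda>z. v z - b z) z)"
        by (auto simp: algebra_simps)
      hence "hnorm ip (\<lambda>z. (u z + v z) - (a z + b z)) < e"
        using tri0[OF sub_in[OF uH(1) aH(1)] sub_in[OF uH(2) aH(2)]] a b by simp
      moreover have "(\<lambda>z. a z + b z) \<in> A" using a b assms subsp_def by auto
      ultimately show "\<exists>a\<in>A. hnorm ip (\<lambda>z. (u z + v z) - a z) < e" by force
    qed
  qed
  have sc: "(\<lambda>z. c * u z) \<in> hclosure H ip A" if u: "u \<in> hclosure H ip A" for u c
  proof -
    have uH: "u \<in> H" using u hcl_sub by auto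
    show ?thesis unfolding hclosure_def
    proof (intro CollectI conjI allI impI scale_in uH)
      fix e :: real assume e: "e > 0"
      have cp: "cmod c + 1 > 0" by (simp add: add_nonneg_pos)
      have e': "e / (cmod c + 1) > 0" using e cp by (rule divide_pos_pos)
      obtain a where a: "a \<in> A" "hnorm ip (\<lambda>z. u z - a z) < e / (cmod c + 1)"
        using hcl_approx[OF u e'] by blast
      have aH: "a \<in> H" using a AH by auto
      have "(\<lambda>z. c * u z - c * a z) = (\<lambda>z. c * (\<lambda>z. u z - a z) z)" by (auto simp: algebra_simps)
      hence "hnorm ip (\<lambda>z. c * u z - c * a z) = cmod c * hnorm ip (\<lambda>z. u z - a z)"
        using hnorm_scale[OF sub_in[OF uH aH]] by simp
      also have "\<dots> \<le> (cmod c + 1) * hnorm ip (\<lambda>z. u z - a z)"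
        using hnorm_nonneg[OF sub_in[OF uH aH]] by (simp add: mult_right_mono)
      also have "\<dots> < (cmod c + 1) * (e / (cmod c + 1))"
        using a(2) by (intro mult_strict_left_mono) (use cp in auto)
      also have "\<dots> = e" using cp by simp
      finally have "hnorm ip (\<lambda>z. c * u z - c * a z) < e" .
      moreover have "(\<lambda>z. c * a z) \<in> A" using a assms subsp_def by auto
      ultimately show "\<exists>a\<in>A. hnorm ip (\<lambda>z. c * u z - a z) < e" by force
    qed
  qed
  show ?thesis unfolding subsp_def using hcl_sub z add sc by blast
qed

lemma hcl_orth: assumes "w \<in> H" "A \<subseteq> H" "\<forall>a\<in>A. ip a w = 0" "h \<in> hclosure H ip A"
  shows "ip h w = 0"
proof (rule ccontr)
  assume ne: "ip h w \<noteq> 0"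
  have hH: "h \<in> H" using assms hcl_sub by auto
  have "hnorm ip w \<noteq> 0"
  proof
    assume "hnorm ip w = 0"
    hence "N w = 0" using hnorm_sq[OF assms(1)] by simp
    hence "w = (\<lambda>z. 0)" using ip_def0 ip_self assms(1) by simp
    thus False using ne ip_zero_right hH by simp
  qed
  hence wp: "hnorm ip w > 0" using hnorm_nonneg[OF assms(1)] by simp
  define e where "e = cmod (ip h w) / hnorm ip w"
  have "e > 0" using ne wp e_def by simp
  then obtain a where a: "a \<in> A" "hnorm ip (\<lambda>z. h z - a z) < e"
    using hcl_approx[OF assms(4)] by blast
  have aH: "a \<in> H" using a assms by auto
  have "ip h w = ip (\<lambda>z. h z - a z) w" using ip_sub[OF hH aH assms(1)] a assms(3) by simp
  hence "cmod (ip h w) \<le> hnorm ip (\<lambda>z. h z - a z) * hnorm ip w"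
    using cs[OF sub_in[OF hH aH] assms(1)] by simp
  also have "\<dots> < e * hnorm ip w" using a(2) wp by simp
  also have "\<dots> = cmod (ip h w)" using wp e_def by simp
  finally show False by simp
qed

lemma hproj_eq: assumes V: "subsp V" and x: "x \<in> H" and g: "g \<in> V"
  and orth: "\<forall>h\<in>V. ip (\<lambda>z. x z - g z) h = 0"
  shows "hproj ip V x = g"
  unfolding hproj_def
proof (rule the_equality)
  show "g \<in> V \<and> (\<forall>h\<in>V. ip (\<lambda>z. x z - g z) h = 0)" using g orth by blast
next
  fix g' assume g': "g' \<in> V \<and> (\<forall>h\<in>V. ip (\<lambda>z. x z - g' z) h = 0)"
  have VH: "V \<subseteq> H" using V subsp_def by auto
  have gH: "g \<in> H" "g' \<in> H" using g g' VH by auto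
  define dd where "dd = (\<lambda>z. g' z - g z)"
  have dV: "dd \<in> V" using subsp_sub[OF V] g g' dd_def by auto
  have "(\<lambda>z. g' z - g z) = (\<lambda>z. (\<lambda>z. x z - g z) z - (\<lambda>z. x z - g' z) z)" by auto
  hence "ip dd dd = ip (\<lambda>z. x z - g z) dd - ip (\<lambda>z. x z - g' z) dd"
    using ip_sub[OF sub_in[OF x gH(1)] sub_in[OF x gH(2)]] dV VH dd_def by auto
  also have "\<dots> = 0" using orth g' dV by simp
  finally have "dd = (\<lambda>z. 0)" using ip_def0 dV VH by auto
  hence "\<And>z. g' z - g z = 0" unfolding dd_def by meson
  thus "g' = g" by (simp add: fun_eq_iff)
qed

end


context ahs begin

lemma subsp_add: "subsp V \<Longrightarrow> u \<in> V \<Longrightarrow> v \<in> V \<Longrightarrow> (\<lambda>z. u z + v z) \<in> V"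
  unfolding subsp_def by (elim conjE) (erule ballE, erule ballE, assumption, blast, blast)
lemma subsp_scale: "subsp V \<Longrightarrow> u \<in> V \<Longrightarrow> (\<lambda>z. c * u z) \<in> V"
  unfolding subsp_def by (elim conjE) (erule ballE, erule allE, assumption, blast)
lemma subsp_H: "subsp V \<Longrightarrow> V \<subseteq> H" unfolding subsp_def by (elim conjE)
lemma subsp_0: "subsp V \<Longrightarrow> (\<lambda>z. 0) \<in> V" unfolding subsp_def by (elim conjE)

lemma proj_exists: assumes V: "subsp V" and C: "closedV V" and x: "x \<in> H"
  shows "\<exists>g\<in>V. \<forall>h\<in>V. ip (\<lambda>z. x z - g z) h = 0"
proof -
  have VH: "V \<subseteq> H" using subsp_H[OF V] .
  define D where "D = (\<lambda>v. hnorm ip (\<lambda>z. x z - v z)) ` V"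
  define \<delta> where "\<delta> = Inf D"
  have z: "(\<lambda>z. 0) \<in> V" using subsp_0[OF V] .
  have Dne: "D \<noteq> {}" using z D_def by auto
  have bdd: "bdd_below D" unfolding D_def bdd_below_def
    using hnorm_nonneg sub_in x VH by blast
  have low: "\<delta> \<le> hnorm ip (\<lambda>z. x z - v z)" if "v \<in> V" for v
    unfolding \<delta>_def using bdd that D_def by (auto intro: cInf_lower)
  have d0: "0 \<le> \<delta>" unfolding \<delta>_def using Dne
    by (rule cInf_greatest) (use hnorm_nonneg sub_in x VH D_def in blast)
  have "\<forall>n. \<exists>v\<in>V. hnorm ip (\<lambda>z. x z - v z) < \<delta> + 1 / real (Suc n)"
  proof
    fix n
    have "\<delta> < \<delta> + 1 / real (Suc n)" by simp
    then obtain t where "t \<in> D" "t < \<delta> + 1 / real (Suc n)"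
      using cInf_lessD[OF Dne] \<delta>_def by blast
    thus "\<exists>v\<in>V. hnorm ip (\<lambda>z. x z - v z) < \<delta> + 1 / real (Suc n)" using D_def by auto
  qed
  then obtain F where F: "\<And>n. F n \<in> V" "\<And>n. hnorm ip (\<lambda>z. x z - F n z) < \<delta> + 1 / real (Suc n)"
    by metis
  have FH: "F n \<in> H" for n using F VH by auto
  have par: "N (\<lambda>z. F m z - F n z) \<le> 2 * (\<delta> + 1 / real (Suc m))^2 + 2 * (\<delta> + 1 / real (Suc n))^2 - 4 * \<delta>^2" for m n
  proof -
    define a where "a = (\<lambda>z. x z - F m z)"
    define b where "b = (\<lambda>z. x z - F n z)"
    have aH: "a \<in> H" "b \<in> H" using a_def b_def sub_in x FH by auto
    have p1: "N (\<lambda>z. a z - 1 * b z) = N a - 2 * Re (ip a b) + N b"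
      using N_expand[OF aH, of 1] by simp
    have p2: "N (\<lambda>z. a z - (-1) * b z) = N a + 2 * Re (ip a b) + N b"
      using N_expand[OF aH, of "-1"] by simp
    have e1: "(\<lambda>z. a z - 1 * b z) = (\<lambda>z. F n z - F m z)" unfolding a_def b_def by auto
    have s1: "N (\<lambda>z. F n z - F m z) = N (\<lambda>z. F m z - F n z)"
    proof -
      have "N (\<lambda>z. F n z - F m z) = (hnorm ip (\<lambda>z. F n z - F m z))^2"
        using hnorm_sq[OF sub_in[OF FH[of n] FH[of m]]] by simp
      also have "hnorm ip (\<lambda>z. F n z - F m z) = hnorm ip (\<lambda>z. F m z - F n z)"
        by (rule hnorm_sym[OF FH[of n] FH[of m]])
      also have "(hnorm ip (\<lambda>z. F m z - F n z))^2 = N (\<lambda>z. F m z - F n z)"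
        using hnorm_sq[OF sub_in[OF FH[of m] FH[of n]]] by simp
      finally show ?thesis .
    qed
    define M where "M = (\<lambda>z. (1/2) * (\<lambda>z. F m z + F n z) z)"
    have MV: "M \<in> V" unfolding M_def by (rule subsp_scale[OF V subsp_add[OF V F(1) F(1)]])
    have e2: "(\<lambda>z. a z - (-1) * b z) = (\<lambda>z. 2 * (\<lambda>z. x z - M z) z)"
      unfolding a_def b_def M_def by (auto simp: algebra_simps)
    have MH: "M \<in> H" using MV VH by auto
    have "N (\<lambda>z. a z - (-1) * b z) = 4 * N (\<lambda>z. x z - M z)"
      unfolding e2 using N_scale[OF sub_in[OF x MH], of 2] by simp
    also have "N (\<lambda>z. x z - M z) = (hnorm ip (\<lambda>z. x z - M z))^2"
      using hnorm_sq[OF sub_in[OF x MH]] by simp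
    finally have q1: "N (\<lambda>z. a z - (-1) * b z) = 4 * (hnorm ip (\<lambda>z. x z - M z))^2" .
    have q2: "(hnorm ip (\<lambda>z. x z - M z))^2 \<ge> \<delta>^2" using low[OF MV] d0 by (simp add: power_mono)
    have q: "N (\<lambda>z. a z - (-1) * b z) \<ge> 4 * \<delta>^2" using q1 q2 by simp
    have "N a = (hnorm ip a)^2" using hnorm_sq aH by simp
    also have "\<dots> \<le> (\<delta> + 1 / real (Suc m))^2"
      using F(2)[of m] hnorm_nonneg[OF aH(1)] a_def by (simp add: power_mono)
    finally have na: "N a \<le> (\<delta> + 1 / real (Suc m))^2" .
    have "N b = (hnorm ip b)^2" using hnorm_sq aH by simp
    also have "\<dots> \<le> (\<delta> + 1 / real (Suc n))^2"
      using F(2)[of n] hnorm_nonneg[OF aH(2)] b_def by (simp add: power_mono)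
    finally have nb: "N b \<le> (\<delta> + 1 / real (Suc n))^2" .
    have p1': "N (\<lambda>z. F m z - F n z) = N a - 2 * Re (ip a b) + N b" using p1 e1 s1 by simp
    show ?thesis using p1' p2 q na nb by linarith
  qed
  have cauchy: "\<forall>e>0. \<exists>K. \<forall>m\<ge>K. \<forall>n\<ge>K. hnorm ip (\<lambda>z. F m z - F n z) < e"
  proof (intro allI impI)
    fix e :: real assume e: "e > 0"
    define \<eta> where "\<eta> = min 1 (e^2 / (4 * (2 * \<delta> + 1) + 1))"
    have \<eta>0: "\<eta> > 0" using e d0 \<eta>_def by simp
    obtain K where K: "inverse (real (Suc K)) < \<eta>" using reals_Archimedean[OF \<eta>0] by blast
    have "hnorm ip (\<lambda>z. F m z - F n z) < e" if "m \<ge> K" "n \<ge> K" for m n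
    proof -
      have im: "1 / real (Suc m) \<le> \<eta>" "1 / real (Suc n) \<le> \<eta>"
        using K that by (auto simp: inverse_eq_divide intro!: order_trans[OF _ less_imp_le[OF K]] frac_le)
      have "(\<delta> + 1 / real (Suc m))^2 \<le> (\<delta> + \<eta>)^2" "(\<delta> + 1 / real (Suc n))^2 \<le> (\<delta> + \<eta>)^2"
        using im d0 by (auto intro!: power_mono)
      hence "N (\<lambda>z. F m z - F n z) \<le> 4 * (\<delta> + \<eta>)^2 - 4 * \<delta>^2" using par[of m n] by linarith
      also have "\<dots> = 4 * \<eta> * (2 * \<delta> + \<eta>)" by (simp add: power2_eq_square algebra_simps)
      also have "\<dots> \<le> 4 * \<eta> * (2 * \<delta> + 1)" using \<eta>0 \<eta>_def by simp
      also have "\<dots> \<le> 4 * (e^2 / (4 * (2 * \<delta> + 1) + 1)) * (2 * \<delta> + 1)"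
      proof -
        have "\<eta> \<le> e^2 / (4 * (2 * \<delta> + 1) + 1)" unfolding \<eta>_def by simp
        hence "4 * \<eta> \<le> 4 * (e^2 / (4 * (2 * \<delta> + 1) + 1))" by simp
        thus ?thesis by (rule mult_right_mono) (use d0 in simp)
      qed
      also have "\<dots> < e^2" using d0 e by (simp add: field_simps)
      finally have "N (\<lambda>z. F m z - F n z) < e^2" .
      hence "sqrt (N (\<lambda>z. F m z - F n z)) < sqrt (e^2)" by (rule real_sqrt_less_mono)
      thus ?thesis using e by (simp add: hnorm_N)
    qed
    thus "\<exists>K. \<forall>m\<ge>K. \<forall>n\<ge>K. hnorm ip (\<lambda>z. F m z - F n z) < e" by blast
  qed
  obtain g where gH: "g \<in> H" and lim: "(\<lambda>n. hnorm ip (\<lambda>z. F n z - g z)) \<longlonglongrightarrow> 0"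
    using complete[OF FH cauchy] by blast
  have ev: "\<exists>K. \<forall>n\<ge>K. hnorm ip (\<lambda>z. F n z - g z) < e" if "e > 0" for e
    using order_tendstoD(2)[OF lim that] unfolding eventually_sequentially by blast
  have gapp: "\<forall>e>0. \<exists>a\<in>V. hnorm ip (\<lambda>z. g z - a z) < e"
  proof (intro allI impI)
    fix e :: real assume "e > 0"
    then obtain K where "\<forall>n\<ge>K. hnorm ip (\<lambda>z. F n z - g z) < e" using ev by blast
    hence "hnorm ip (\<lambda>z. F K z - g z) < e" by blast
    hence "hnorm ip (\<lambda>z. g z - F K z) < e" using hnorm_sym[OF FH[of K] gH] by simp
    thus "\<exists>a\<in>V. hnorm ip (\<lambda>z. g z - a z) < e" using F(1) by blast
  qed
  have gV: "g \<in> V" using C gH gapp unfolding closedV_def by blast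
  have mini: "hnorm ip (\<lambda>z. x z - g z) \<le> \<delta>"
  proof (rule field_le_epsilon)
    fix e :: real assume e: "e > 0"
    obtain K1 where K1: "\<forall>n\<ge>K1. hnorm ip (\<lambda>z. F n z - g z) < e/2" using ev e by (meson half_gt_zero)
    obtain K2 where K2: "inverse (real (Suc K2)) < e/2" using reals_Archimedean e by (meson half_gt_zero)
    define n where "n = max K1 K2"
    have "1 / real (Suc n) \<le> inverse (real (Suc K2))" unfolding n_def
      by (simp add: inverse_eq_divide frac_le)
    hence a: "hnorm ip (\<lambda>z. x z - F n z) < \<delta> + e/2" using F(2)[of n] K2 by linarith
    have b: "hnorm ip (\<lambda>z. F n z - g z) < e/2" using K1 n_def by simp
    have "hnorm ip (\<lambda>z. x z - g z) \<le> hnorm ip (\<lambda>z. x z - F n z) + hnorm ip (\<lambda>z. F n z - g z)"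
      using tri[OF x FH gH] .
    thus "hnorm ip (\<lambda>z. x z - g z) \<le> \<delta> + e" using a b by linarith
  qed
  have orth: "ip (\<lambda>z. x z - g z) h = 0" if hV: "h \<in> V" for h
  proof (rule ccontr)
    define w where "w = (\<lambda>z. x z - g z)"
    have wH: "w \<in> H" using w_def sub_in x gH by auto
    have hH: "h \<in> H" using hV VH by auto
    define a where "a = ip w h"
    assume "ip (\<lambda>z. x z - g z) h \<noteq> 0"
    hence a0: "a \<noteq> 0" using a_def w_def by simp
    have "N h \<noteq> 0"
    proof
      assume "N h = 0"
      hence "h = (\<lambda>z. 0)" using ip_def0[OF hH] ip_self[OF hH] by simp
      thus False using a0 a_def ip_zero_right wH by simp
    qed
    hence Nh: "N h > 0" using N_nonneg[OF hH] by simp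
    define s where "s = 1 / (N h + 1)"
    have s0: "s > 0" using Nh s_def by simp
    have sN: "s * N h < 1" using Nh s_def s0 by (simp add: field_simps)
    define v where "v = (\<lambda>z. g z + (\<lambda>z. (complex_of_real s * a) * h z) z)"
    have vV: "v \<in> V" unfolding v_def by (rule subsp_add[OF V gV subsp_scale[OF V hV]])
    have ev2: "(\<lambda>z. x z - v z) = (\<lambda>z. w z - (complex_of_real s * a) * h z)"
      unfolding v_def w_def by auto
    have re: "Re (cnj (complex_of_real s * a) * a) = s * (cmod a)^2"
    proof -
      have "cnj (complex_of_real s * a) * a = complex_of_real s * (a * cnj a)" by (simp only: complex_cnj_mult complex_cnj_complex_of_real mult_ac)
      also have "a * cnj a = complex_of_real ((cmod a)^2)" using complex_norm_square[of a] by simp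
      also have "complex_of_real s * complex_of_real ((cmod a)^2) = complex_of_real (s * (cmod a)^2)" by simp
      finally have X: "cnj (complex_of_real s * a) * a = complex_of_real (s * (cmod a)^2)" .
      show ?thesis unfolding X by (simp only: Re_complex_of_real)
    qed
    have nm: "(cmod (complex_of_real s * a))^2 = s^2 * (cmod a)^2" using s0
      by (simp add: norm_mult power_mult_distrib)
    have "N (\<lambda>z. x z - v z) = N w - 2 * (s * (cmod a)^2) + s^2 * (cmod a)^2 * N h"
      unfolding ev2 using N_expand[OF wH hH, of "complex_of_real s * a"] re nm a_def by simp
    moreover have "N w \<le> N (\<lambda>z. x z - v z)"
    proof -
      have "hnorm ip w \<le> hnorm ip (\<lambda>z. x z - v z)" using mini low[OF vV] w_def by simp
      hence "(hnorm ip w)^2 \<le> (hnorm ip (\<lambda>z. x z - v z))^2"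
        using hnorm_nonneg[OF wH] by (simp add: power_mono)
      thus ?thesis using hnorm_sq wH sub_in x vV VH by auto
    qed
    ultimately have "0 \<le> s * (cmod a)^2 * (s * N h - 2)" by (simp add: algebra_simps power2_eq_square)
    moreover have "s * (cmod a)^2 * (s * N h - 2) < 0"
      using s0 a0 sN by (intro mult_pos_neg) auto
    ultimately show False by simp
  qed
  show ?thesis using gV orth by blast
qed

end


lemma poly_holo: "poly p holomorphic_on S"
proof (induction p rule: pCons_induct)
  case 0 thus ?case by (simp add: holomorphic_on_const)
next
  case (pCons a p)
  have e: "poly (pCons a p) = (\<lambda>z. a + z * poly p z)" by (auto)
  show ?case unfolding e using pCons.IH by (auto intro!: holomorphic_intros)
qed

context ahs begin

definition Ag :: "cfun \<Rightarrow> cfun set" where "Ag g = {(\<lambda>z. poly p z * g z) | p. True}"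

lemma cyc_Ag: "cyc H ip g = hclosure H ip (Ag g)" unfolding cyc_def Ag_def by simp

lemma polymul_in: assumes "g \<in> H" shows "(\<lambda>z. poly p z * g z) \<in> H"
proof (induction p rule: pCons_induct)
  case 0 thus ?case using zero_in by simp
next
  case (pCons a p)
  have "(\<lambda>z. poly (pCons a p) z * g z) = (\<lambda>z. (\<lambda>z. a * g z) z + shift (\<lambda>z. poly p z * g z) z)"
    by (auto simp: shift_def algebra_simps)
  thus ?case using add_in scale_in shift_in pCons.IH assms by metis
qed

lemma Ag_subsp: assumes "g \<in> H" shows "subsp (Ag g)"
  unfolding subsp_def
proof (intro conjI ballI allI)
  show "Ag g \<subseteq> H" unfolding Ag_def using polymul_in assms by auto
  show "(\<lambda>z. 0) \<in> Ag g" unfolding Ag_def by (rule CollectI, rule exI[of _ 0]) simp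
  fix u v assume u: "u \<in> Ag g" and v: "v \<in> Ag g"
  then obtain p q where "u = (\<lambda>z. poly p z * g z)" "v = (\<lambda>z. poly q z * g z)" unfolding Ag_def by auto
  hence "(\<lambda>z. u z + v z) = (\<lambda>z. poly (p + q) z * g z)" by (auto simp: algebra_simps)
  thus "(\<lambda>z. u z + v z) \<in> Ag g" unfolding Ag_def by blast
next
  fix u c assume u: "u \<in> Ag g"
  then obtain p where "u = (\<lambda>z. poly p z * g z)" unfolding Ag_def by auto
  hence "(\<lambda>z. c * u z) = (\<lambda>z. poly (smult c p) z * g z)" by auto
  thus "(\<lambda>z. c * u z) \<in> Ag g" unfolding Ag_def by blast
qed

lemma cyc_subsp: "g \<in> H \<Longrightarrow> subsp (cyc H ip g)"
  unfolding cyc_Ag by (rule hcl_subsp[OF Ag_subsp])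

lemma cyc_closed: "g \<in> H \<Longrightarrow> closedV (cyc H ip g)"
  unfolding cyc_Ag by (rule hcl_closed[OF subsp_H[OF Ag_subsp]])

lemma hcl_idem: assumes "A \<subseteq> H" "B \<subseteq> hclosure H ip A" shows "hclosure H ip B \<subseteq> hclosure H ip A"
proof
  fix y assume y: "y \<in> hclosure H ip B"
  have "closedV (hclosure H ip A)" using hcl_closed assms by simp
  moreover have "y \<in> H" "\<forall>e>0. \<exists>a\<in>hclosure H ip A. hnorm ip (\<lambda>z. y z - a z) < e"
    using y assms(2) unfolding hclosure_def by blast+
  ultimately show "y \<in> hclosure H ip A" unfolding closedV_def by blast
qed

lemma cyc_shift_sub: assumes "f \<in> H" shows "cyc H ip (shift f) \<subseteq> cyc H ip f"
proof -
  have "Ag (shift f) \<subseteq> Ag f"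
  proof
    fix u assume "u \<in> Ag (shift f)"
    then obtain p where "u = (\<lambda>z. poly p z * shift f z)" unfolding Ag_def by auto
    hence "u = (\<lambda>z. poly (p * [:0,1:]) z * f z)" by (auto simp: shift_def algebra_simps)
    thus "u \<in> Ag f" unfolding Ag_def by blast
  qed
  also have "\<dots> \<subseteq> hclosure H ip (Ag f)" using hcl_incl[OF subsp_H[OF Ag_subsp[OF assms]]] .
  finally show ?thesis unfolding cyc_Ag by (rule hcl_idem[OF subsp_H[OF Ag_subsp[OF assms]]])
qed

lemma f_in_cyc: "f \<in> H \<Longrightarrow> f \<in> cyc H ip f"
proof -
  assume f: "f \<in> H"
  have "f = (\<lambda>z. poly 1 z * f z)" by simp
  hence "f \<in> Ag f" unfolding Ag_def by blast
  thus ?thesis unfolding cyc_Ag using hcl_incl[OF subsp_H[OF Ag_subsp[OF f]]] by blast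
qed

end


context ahs begin

lemma order_facts: assumes f: "f \<in> H" "f \<noteq> (\<lambda>z. 0)"
  shows "(\<forall>k<nat (zorder f 0). (deriv ^^ k) f 0 = 0) \<and> (deriv ^^ nat (zorder f 0)) f 0 \<noteq> 0"
proof -
  obtain w where w: "f w \<noteq> 0" using f(2) by auto
  hence wO: "w \<in> Om" using out0 f(1) by blast
  have ex: "\<exists>k. (deriv ^^ k) f 0 \<noteq> 0"
  proof (rule ccontr)
    assume "\<not> ?thesis"
    hence "f w = 0" using holomorphic_fun_eq_0_on_connected[OF holo[OF f(1)] Om(1) Om(2) _ Om(3) wO] by auto
    thus False using w by simp
  qed
  define m where "m = (LEAST k. (deriv ^^ k) f 0 \<noteq> 0)"
  have m1: "(deriv ^^ m) f 0 \<noteq> 0" unfolding m_def using LeastI_ex[OF ex] .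
  have m2: "\<And>k. k < m \<Longrightarrow> (deriv ^^ k) f 0 = 0" unfolding m_def using not_less_Least by blast
  have "zorder f 0 = int m"
    by (rule zorder_zero_eqI[OF holo[OF f(1)] Om(1) Om(3)]) (use m1 m2 in auto)
  thus ?thesis using m1 m2 by simp
qed

lemma deriv_Sf: assumes f: "f \<in> H" and z: "\<forall>k<d. (deriv ^^ k) f 0 = 0"
  shows "(deriv ^^ d) (\<lambda>z. poly p z * shift f z) 0 = 0"
proof -
  have e: "(\<lambda>z. poly p z * shift f z) = (\<lambda>z. (\<lambda>z. poly p z * z) z * f z)"
    by (auto simp: shift_def algebra_simps)
  have qh: "(\<lambda>z. poly p z * z) holomorphic_on Om"
    using poly_holo by (auto intro!: holomorphic_intros)
  have "(deriv ^^ d) (\<lambda>z. poly p z * shift f z) 0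
     = (\<Sum>i = 0..d. of_nat (d choose i) * (deriv ^^ i) (\<lambda>z. poly p z * z) 0 * (deriv ^^ (d-i)) f 0)"
    unfolding e by (rule higher_deriv_mult[OF qh holo[OF f] Om(1) Om(3)])
  also have "\<dots> = 0"
  proof (rule sum.neutral, intro ballI)
    fix i assume "i \<in> {0..d}"
    show "of_nat (d choose i) * (deriv ^^ i) (\<lambda>z. poly p z * z) 0 * (deriv ^^ (d-i)) f 0 = 0"
    proof (cases "i = 0")
      case True thus ?thesis by simp
    next
      case False
      hence "d - i < d \<or> d = 0" by auto
      thus ?thesis using z False \<open>i \<in> {0..d}\<close> by auto
    qed
  qed
  finally show ?thesis .
qed

end



context ahs begin

lemma main_loc:
  assumes f: "f \<in> H" "f \<noteq> (\<lambda>z. 0)"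
    and d: "d = nat (zorder f 0)"
    and k: "k0d \<in> H" and kd: "\<forall>g\<in>H. ip g k0d = (deriv ^^ d) g 0"
  shows "let J = (\<lambda>z. f z - hproj ip (cyc H ip (shift f)) f z);
             v = hproj ip (cyc H ip f) k0d
         in v = (\<lambda>z. ((deriv ^^ d) v 0 / (deriv ^^ d) f 0) * J z)"
proof -
  have of: "\<forall>k<d. (deriv ^^ k) f 0 = 0" "(deriv ^^ d) f 0 \<noteq> 0"
    using order_facts[OF f] d by auto
  have Sf: "shift f \<in> H" using shift_in f by simp
  define VS where "VS = cyc H ip (shift f)"
  define VF where "VF = cyc H ip f"
  have VSs: "subsp VS" and VSc: "closedV VS" using cyc_subsp cyc_closed Sf VS_def by auto
  have VFs: "subsp VF" using cyc_subsp f VF_def by auto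
  have VSF: "VS \<subseteq> VF" using cyc_shift_sub f VS_def VF_def by auto
  have VSH: "VS \<subseteq> H" and VFH: "VF \<subseteq> H" using subsp_H[OF VSs] subsp_H[OF VFs] by auto
  have ASH: "Ag (shift f) \<subseteq> H" using subsp_H[OF Ag_subsp[OF Sf]] .
  have kS: "\<forall>h\<in>VS. ip h k0d = 0"
  proof
    fix h assume h: "h \<in> VS"
    have "\<forall>a\<in>Ag (shift f). ip a k0d = 0"
    proof
      fix a assume a: "a \<in> Ag (shift f)"
      then obtain p where p: "a = (\<lambda>z. poly p z * shift f z)" unfolding Ag_def by auto
      have "a \<in> H" using a ASH by auto
      thus "ip a k0d = 0" using kd deriv_Sf[OF f(1) of(1)] p by simp
    qed
    thus "ip h k0d = 0" using hcl_orth[OF k ASH] h VS_def cyc_Ag by simp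
  qed
  obtain P where PV: "P \<in> VS" and Porth: "\<forall>h\<in>VS. ip (\<lambda>z. f z - P z) h = 0"
    using proj_exists[OF VSs VSc f(1)] by blast
  have Peq: "hproj ip VS f = P" using hproj_eq[OF VSs f(1) PV Porth] .
  have PH: "P \<in> H" using PV VSH by auto
  define J where "J = (\<lambda>z. f z - P z)"
  have JH: "J \<in> H" using J_def sub_in f PH by auto
  have JF: "J \<in> VF" unfolding J_def using subsp_sub[OF VFs] f_in_cyc f PV VSF VF_def by auto
  have dJ: "ip J k0d = (deriv ^^ d) f 0"
    using ip_sub[OF f(1) PH k] kS PV kd f(1) J_def by simp
  have JJ: "ip J J \<noteq> 0"
  proof
    assume "ip J J = 0"
    hence "J = (\<lambda>z. 0)" using ip_def0 JH by simp
    hence "ip J k0d = 0" using ip_zero_left k by simp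
    thus False using dJ of(2) by simp
  qed
  have JJr: "cnj (ip J J) = ip J J" using ip_self[OF JH] by simp
  define c where "c = cnj (ip J k0d) / ip J J"
  define v0 where "v0 = (\<lambda>z. c * J z)"
  have v0H: "v0 \<in> H" using scale_in JH v0_def by auto
  have v0F: "v0 \<in> VF" unfolding v0_def by (rule subsp_scale[OF VFs JF])
  define w where "w = (\<lambda>z. k0d z - v0 z)"
  have wH: "w \<in> H" using w_def sub_in k v0H by auto
  have AfH: "Ag f \<subseteq> H" using subsp_H[OF Ag_subsp[OF f(1)]] .
  have wA: "\<forall>a\<in>Ag f. ip a w = 0"
  proof
    fix a assume a: "a \<in> Ag f"
    then obtain p where p: "a = (\<lambda>z. poly p z * f z)" unfolding Ag_def by auto
    obtain p0 q where pq: "p = pCons p0 q" by (cases p) auto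
    define u where "u = (\<lambda>z. (\<lambda>z. p0 * P z) z + (\<lambda>z. poly q z * shift f z) z)"
    have qS: "(\<lambda>z. poly q z * shift f z) \<in> VS"
      using hcl_incl[OF ASH] unfolding VS_def cyc_Ag Ag_def by blast
    have uS: "u \<in> VS" unfolding u_def by (rule subsp_add[OF VSs subsp_scale[OF VSs PV] qS])
    have uH: "u \<in> H" using uS VSH by auto
    have ae: "a = (\<lambda>z. (\<lambda>z. p0 * J z) z + u z)"
      unfolding p pq u_def J_def by (auto simp: shift_def algebra_simps)
    have pJH: "(\<lambda>z. p0 * J z) \<in> H" using scale_in JH by auto
    have "ip a w = p0 * ip J w + ip u w"
      unfolding ae using ip_add[OF pJH uH wH] ip_scale[OF JH wH] by simp
    also have "ip u w = ip u k0d - cnj c * ip u J"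
      unfolding w_def v0_def using ip_sub_r[OF k scale_in[OF JH] uH] ip_scale_r[OF JH uH] by simp
    also have "ip u J = cnj (ip J u)" by (rule ip_sym[OF JH uH])
    also have "ip J u = 0" using Porth uS J_def by simp
    also have "ip u k0d = 0" using kS uS by simp
    also have "ip J w = ip J k0d - cnj c * ip J J"
      unfolding w_def v0_def using ip_sub_r[OF k scale_in[OF JH] JH] ip_scale_r[OF JH JH] by simp
    also have "cnj c * ip J J = ip J k0d" unfolding c_def using JJ JJr by simp
    finally show "ip a w = 0" by simp
  qed
  have worth: "\<forall>h\<in>VF. ip (\<lambda>z. k0d z - v0 z) h = 0"
  proof
    fix h assume h: "h \<in> VF"
    have hH: "h \<in> H" using h VFH by auto
    have "ip h w = 0" using hcl_orth[OF wH AfH wA] h VF_def cyc_Ag by simp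
    thus "ip (\<lambda>z. k0d z - v0 z) h = 0" using ip_sym[OF hH wH] w_def by simp
  qed
  have veq: "hproj ip VF k0d = v0" using hproj_eq[OF VFs k v0F worth] .
  have dv: "(deriv ^^ d) v0 0 = c * (deriv ^^ d) f 0"
  proof -
    have "(deriv ^^ d) v0 0 = c * (deriv ^^ d) J 0"
      unfolding v0_def by (rule higher_deriv_cmult[OF holo[OF JH] Om(3) Om(1)])
    also have "(deriv ^^ d) J 0 = (deriv ^^ d) f 0" using kd JH dJ by simp
    finally show ?thesis .
  qed
  have "v0 = (\<lambda>z. ((deriv ^^ d) v0 0 / (deriv ^^ d) f 0) * J z)"
    using dv of(2) v0_def by simp
  thus ?thesis using veq Peq unfolding VS_def VF_def J_def Let_def by simp
qed

end

theorem mainTheorem2: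
  fixes \<Omega> :: "complex set" and H :: "cfun set" and ip :: "cfun \<Rightarrow> cfun \<Rightarrow> complex"
    and f k0d :: cfun and d :: nat
  assumes "analytic_hilbert_space \<Omega> H ip"
    and "f \<in> H" and "f \<noteq> (\<lambda>z. 0)"
    and "d = nat (zorder f 0)"
    and "k0d \<in> H" and "\<forall>g\<in>H. ip g k0d = (deriv ^^ d) g 0"
  shows "let J = (\<lambda>z. f z - hproj ip (cyc H ip (shift f)) f z);
             v = hproj ip (cyc H ip f) k0d
         in v = (\<lambda>z. ((deriv ^^ d) v 0 / (deriv ^^ d) f 0) * J z)"
proof -
  interpret ahs \<Omega> H ip using assms(1) by (unfold_locales)
  show ?thesis using main_loc assms(2-) by blast
qed


end
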